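(* Let $c=1$ and $\phi(x;\mu)=\exp\!\big(-\tfrac12(x-\mu)^2\big)$ for $x,\mu\in\mathbb{R}$. Consider the wave equation $\partial_t^2 u = \partial_x^2 u$ on $\mathbb{R}$ with initial data $u(0,x)=\phi(x;-2)+\phi(x;2)$ and $\partial_t u(0,x)=\partial_\mu\phi(x;-2)-\partial_\mu\phi(x;2)$. Its exact solution is $u(t,x)=\phi(x-t;-2)+\phi(x+t;2)$. Write it in first-order form for the state $(u^{(1)},u^{(2)})=(u,\partial_t u)$, i.e. $\partial_t (u^{(1)},u^{(2)})=\mathcal{F}(u^{(1)},u^{(2)}):=(u^{(2)},\partial_x^2 u^{(1)})$, and use the parametrization $\hat u(\theta,x)=(\hat u^{(1)}(\theta,x),\hat u^{(2)}(\theta,x))$, $\theta\in\mathbb{R}^4$, with $$\hat u^{(1)}(\theta,x)=\phi(x;\theta_1)+\phi(x;\theta_2),\qquad \hat u^{(2)}(\theta,x)=\partial_\mu\phi(x;\theta_3)-\partial_\mu\phi(x;\theta_4).$$ Let $\tau>0$ and let $$\theta^*(t)=[-2+t,\;2-t,\;-2+t,\;2-t]^\top,\qquad q=\dot\theta^*(t)=[1,-1,1,-1]^\top.$$ Consider the continuous-time Dirac–Frenkel–Onsager (DFO) dynamics $$\tau\,\dot m(t)=\bar\eta(\theta(t))-m(t),\qquad \dot\theta(t)=\bar\eta(\theta(t))+\lambda P(\theta(t))\,m(t),$$ initialized with $\theta(0)=\theta^*(0)$ and $m(0)=0$, and choose $$\lambda=\big(1-e^{-2/\tau}\big)^{-1}.$$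 Then the path $\theta^*(t)$ satisfies the continuous-time DFO dynamics for all $t\ge 0$ (with $m(t)$ the corresponding solution of the Onsager equation along $\theta^*$, so that in particular $m(t)=(1-e^{-t/\tau})q$ for $0\le t<2$ and $\dot\theta^*(2)=\bar\eta(\theta^*(2))+\lambda P(\theta^*(2))m(2)$ with $m(2)=(1-e^{-2/\tau})q$), and the represented function $\hat u(\theta^*(t),\cdot)$ equals the exact solution $(u(t,\cdot),\partial_t u(t,\cdot))$ for all $t\ge 0$.
   Context: $\langle\cdot,\cdot\rangle$ denotes the $L^2(\mathbb{R};\mathbb{R}^2)$ inner product (sum of the $L^2$ inner products of the two components). For $\theta\in\mathbb{R}^4$, the Gram matrix $G(\theta)\in\mathbb{R}^{4\times4}$ and vector $g(\theta)\in\mathbb{R}^4$ are $G_{ij}(\theta)=\langle\partial_{\theta_i}\hat u(\theta,\cdot),\partial_{\theta_j}\hat u(\theta,\cdot)\rangle$ and $g_i(\theta)=\langle\partial_{\theta_i}\hat u(\theta,\cdot),\mathcal{F}(\hat u(\theta,\cdot))\rangle$; these are the normal equations of the Dirac–Frenkel least-squares problem $\min_{\eta\in\mathbb{R}^4}\|\nabla_\theta\hat u(\theta,\cdot)^\top\eta-\mathcal{F}(\hat u(\theta,\cdot))\|^2$. The reference (Dirac–Frenkel) velocity is the minimal-norm solution $\bar\eta(\theta)=G(\theta)^{+}g(\theta)$ ($^{+}$ = Moore–Penrose pseudoinverse). $P(\theta)$ denotes the orthogonal projector of $\mathbb{R}^4$ onto $\operatorname{null}(G(\theta))$. *)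

theory Defs
  imports "HOL-Analysis.Analysis"
begin

definition phi :: "real \<Rightarrow> real \<Rightarrow> real" where
  "phi x \<mu> = exp (-(1/2) * (x - \<mu>)\<^sup>2)"

definition dmu_phi :: "real \<Rightarrow> real \<Rightarrow> real" where
  "dmu_phi x \<mu> = deriv (\<lambda>m. phi x m) \<mu>"

definition uhat1 :: "real^4 \<Rightarrow> real \<Rightarrow> real" where
  "uhat1 \<theta> x = phi x (\<theta>$1) + phi x (\<theta>$2)"

definition uhat2 :: "real^4 \<Rightarrow> real \<Rightarrow> real" where
  "uhat2 \<theta> x = dmu_phi x (\<theta>$3) - dmu_phi x (\<theta>$4)"

definition uhat :: "real^4 \<Rightarrow> real \<Rightarrow> real \<times> real" where
  "uhat \<theta> x = (uhat1 \<theta> x, uhat2 \<theta> x)"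

definition l2inner :: "(real \<Rightarrow> real \<times> real) \<Rightarrow> (real \<Rightarrow> real \<times> real) \<Rightarrow> real" where
  "l2inner f g = (LINT x|lborel. fst (f x) * fst (g x)) + (LINT x|lborel. snd (f x) * snd (g x))"

definition Fop :: "(real \<Rightarrow> real \<times> real) \<Rightarrow> real \<Rightarrow> real \<times> real" where
  "Fop w x = (snd (w x), deriv (deriv (\<lambda>y. fst (w y))) x)"

definition dtheta :: "4 \<Rightarrow> real^4 \<Rightarrow> real \<Rightarrow> real \<times> real" where
  "dtheta i \<theta> x =
     (deriv (\<lambda>s. uhat1 (\<theta> + s *\<^sub>R axis i 1) x) 0,
      deriv (\<lambda>s. uhat2 (\<theta> + s *\<^sub>R axis i 1) x) 0)"

definition gram :: "real^4 \<Rightarrow> real^4^4" where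
  "gram \<theta> = (\<chi> i j. l2inner (dtheta i \<theta>) (dtheta j \<theta>))"

definition gvec :: "real^4 \<Rightarrow> real^4" where
  "gvec \<theta> = (\<chi> i. l2inner (dtheta i \<theta>) (Fop (uhat \<theta>)))"

definition pinv :: "real^'n^'m \<Rightarrow> real^'m^'n" where
  "pinv A = (THE X. A ** X ** A = A \<and> X ** A ** X = X \<and>
                    transpose (A ** X) = A ** X \<and> transpose (X ** A) = X ** A)"

definition null_proj :: "real^'n^'m \<Rightarrow> real^'n \<Rightarrow> real^'n" where
  "null_proj A v = (THE p. A *v p = 0 \<and> (\<forall>w. A *v w = 0 \<longrightarrow> (v - p) \<bullet> w = 0))"

definition eta_bar :: "real^4 \<Rightarrow> real^4" where
  "eta_bar \<theta> = pinv (gram \<theta>) *v gvec \<theta>"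

definition theta_star :: "real \<Rightarrow> real^4" where
  "theta_star t = vector [-2 + t, 2 - t, -2 + t, 2 - t]"

definition qvec :: "real^4" where
  "qvec = vector [1, -1, 1, -1]"

definition u_exact :: "real \<Rightarrow> real \<Rightarrow> real" where
  "u_exact t x = phi (x - t) (-2) + phi (x + t) 2"

end

theory Submission
  imports Defs "HOL-Probability.Distributions"
begin


lemma vector_4 [simp]:
 "(vector [x,y,z,w] ::('a::zero)^4)$1 = x"
 "(vector [x,y,z,w] ::('a::zero)^4)$2 = y"
 "(vector [x,y,z,w] ::('a::zero)^4)$3 = z"
 "(vector [x,y,z,w] ::('a::zero)^4)$4 = w"
  unfolding vector_def by simp_all

definition psi :: "real \<Rightarrow> real" where "psi y = y * exp (-(1/2) * y\<^sup>2)"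
definition chi :: "real \<Rightarrow> real" where "chi y = (y\<^sup>2 - 1) * exp (-(1/2) * y\<^sup>2)"

lemma phi_dmu: "((\<lambda>m. phi x m) has_real_derivative psi (x - \<mu>)) (at \<mu>)"
  unfolding phi_def psi_def
  by (auto intro!: derivative_eq_intros simp: power2_eq_square algebra_simps)

lemma dmu_phi_eq: "dmu_phi x \<mu> = psi (x - \<mu>)"
  unfolding dmu_phi_def using phi_dmu by (rule DERIV_imp_deriv)

lemma psi_dmu: "((\<lambda>m. psi (x - m)) has_real_derivative chi (x - \<mu>)) (at \<mu>)"
  unfolding chi_def psi_def
  by (auto intro!: derivative_eq_intros simp: power2_eq_square algebra_simps)

lemma phi_dx: "((\<lambda>y. phi y m) has_real_derivative - psi (x - m)) (at x)"
  unfolding phi_def psi_def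
  by (auto intro!: derivative_eq_intros simp: power2_eq_square algebra_simps)

lemma psi_dx: "((\<lambda>y. - psi (y - m)) has_real_derivative chi (x - m)) (at x)"
  unfolding chi_def psi_def
  by (auto intro!: derivative_eq_intros simp: power2_eq_square algebra_simps)

lemma axis_comp: "axis i (1::real) $ j = (if j = i then 1 else 0)"
  by (simp add: axis_def)

lemma dtheta1: "dtheta 1 \<theta> x = (psi (x - \<theta>$1), 0)"
proof -
  have "((\<lambda>s. uhat1 (\<theta> + s *\<^sub>R axis 1 1) x) has_real_derivative psi (x - \<theta>$1)) (at 0)"
  proof -
    have e: "(\<lambda>s. uhat1 (\<theta> + s *\<^sub>R axis 1 1) x) = (\<lambda>s. phi x (\<theta>$1 + s) + phi x (\<theta>$2))"
      by (simp add: uhat1_def axis_comp)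
    have "((\<lambda>s. phi x (\<theta>$1 + s)) has_real_derivative psi (x - (\<theta>$1 + 0)) * 1) (at 0)"
      by (rule DERIV_chain2[OF phi_dmu]) (auto intro!: derivative_eq_intros)
    then show ?thesis unfolding e by (auto intro!: derivative_eq_intros)
  qed
  moreover have "(\<lambda>s. uhat2 (\<theta> + s *\<^sub>R axis 1 1) x) = (\<lambda>s. uhat2 \<theta> x)"
    by (simp add: uhat2_def axis_comp)
  ultimately show ?thesis unfolding dtheta_def by (simp add: DERIV_imp_deriv)
qed

lemma dtheta2: "dtheta 2 \<theta> x = (psi (x - \<theta>$2), 0)"
proof -
  have "((\<lambda>s. uhat1 (\<theta> + s *\<^sub>R axis 2 1) x) has_real_derivative psi (x - \<theta>$2)) (at 0)"
  proof -
    have e: "(\<lambda>s. uhat1 (\<theta> + s *\<^sub>R axis 2 1) x) = (\<lambda>s. phi x (\<theta>$1) + phi x (\<theta>$2 + s))"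
      by (simp add: uhat1_def axis_comp)
    have "((\<lambda>s. phi x (\<theta>$2 + s)) has_real_derivative psi (x - (\<theta>$2 + 0)) * 1) (at 0)"
      by (rule DERIV_chain2[OF phi_dmu]) (auto intro!: derivative_eq_intros)
    then show ?thesis unfolding e by (auto intro!: derivative_eq_intros)
  qed
  moreover have "(\<lambda>s. uhat2 (\<theta> + s *\<^sub>R axis 2 1) x) = (\<lambda>s. uhat2 \<theta> x)"
    by (simp add: uhat2_def axis_comp)
  ultimately show ?thesis unfolding dtheta_def by (simp add: DERIV_imp_deriv)
qed

lemma dtheta3: "dtheta 3 \<theta> x = (0, chi (x - \<theta>$3))"
proof -
  have "((\<lambda>s. uhat2 (\<theta> + s *\<^sub>R axis 3 1) x) has_real_derivative chi (x - \<theta>$3)) (at 0)"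
  proof -
    have e: "(\<lambda>s. uhat2 (\<theta> + s *\<^sub>R axis 3 1) x) = (\<lambda>s. psi (x - (\<theta>$3 + s)) - psi (x - \<theta>$4))"
      by (simp add: uhat2_def axis_comp dmu_phi_eq)
    have "((\<lambda>s. psi (x - (\<theta>$3 + s))) has_real_derivative chi (x - (\<theta>$3 + 0)) * 1) (at 0)"
      by (rule DERIV_chain2[OF psi_dmu]) (auto intro!: derivative_eq_intros)
    then show ?thesis unfolding e by (auto intro!: derivative_eq_intros)
  qed
  moreover have "(\<lambda>s. uhat1 (\<theta> + s *\<^sub>R axis 3 1) x) = (\<lambda>s. uhat1 \<theta> x)"
    by (simp add: uhat1_def axis_comp)
  ultimately show ?thesis unfolding dtheta_def by (simp add: DERIV_imp_deriv)
qed

lemma dtheta4: "dtheta 4 \<theta> x = (0, - chi (x - \<theta>$4))"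
proof -
  have "((\<lambda>s. uhat2 (\<theta> + s *\<^sub>R axis 4 1) x) has_real_derivative - chi (x - \<theta>$4)) (at 0)"
  proof -
    have e: "(\<lambda>s. uhat2 (\<theta> + s *\<^sub>R axis 4 1) x) = (\<lambda>s. psi (x - \<theta>$3) - psi (x - (\<theta>$4 + s)))"
      by (simp add: uhat2_def axis_comp dmu_phi_eq)
    have "((\<lambda>s. psi (x - (\<theta>$4 + s))) has_real_derivative chi (x - (\<theta>$4 + 0)) * 1) (at 0)"
      by (rule DERIV_chain2[OF psi_dmu]) (auto intro!: derivative_eq_intros)
    then show ?thesis unfolding e by (auto intro!: derivative_eq_intros)
  qed
  moreover have "(\<lambda>s. uhat1 (\<theta> + s *\<^sub>R axis 4 1) x) = (\<lambda>s. uhat1 \<theta> x)"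
    by (simp add: uhat1_def axis_comp)
  ultimately show ?thesis unfolding dtheta_def by (simp add: DERIV_imp_deriv)
qed

lemma Fop_uhat: "Fop (uhat \<theta>) x = (psi (x - \<theta>$3) - psi (x - \<theta>$4), chi (x - \<theta>$1) + chi (x - \<theta>$2))"
proof -
  have d1: "deriv (\<lambda>y. fst (uhat \<theta> y)) = (\<lambda>y. - psi (y - \<theta>$1) + - psi (y - \<theta>$2))"
  proof
    fix y
    show "deriv (\<lambda>y. fst (uhat \<theta> y)) y = - psi (y - \<theta>$1) + - psi (y - \<theta>$2)"
      unfolding uhat_def uhat1_def fst_conv
      by (rule DERIV_imp_deriv, rule DERIV_add[OF phi_dx phi_dx])
  qed
  have "deriv (\<lambda>y. - psi (y - \<theta>$1) + - psi (y - \<theta>$2)) x = chi (x - \<theta>$1) + chi (x - \<theta>$2)"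
    by (rule DERIV_imp_deriv, rule DERIV_add[OF psi_dx psi_dx])
  then show ?thesis unfolding Fop_def d1 by (simp add: uhat_def uhat2_def dmu_phi_eq)
qed



lemma psi_bound: "\<bar>psi y\<bar> \<le> 1"
proof -
  have "1 + y\<^sup>2/2 \<le> exp (y\<^sup>2/2)" using exp_ge_add_one_self[of "y\<^sup>2/2"] by simp
  moreover have "\<bar>y\<bar> \<le> 1 + y\<^sup>2/2"
    using sum_squares_ge_zero[of "\<bar>y\<bar> - 1" 0] by (simp add: power2_eq_square algebra_simps abs_mult_self_eq) 
  ultimately have "\<bar>y\<bar> \<le> exp (y\<^sup>2/2)" by linarith
  then have "\<bar>y\<bar> * exp (-(1/2) * y\<^sup>2) \<le> exp (y\<^sup>2/2) * exp (-(1/2) * y\<^sup>2)"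
    by (intro mult_right_mono) auto
  also have "\<dots> = 1" by (simp add: exp_add[symmetric])
  finally show ?thesis by (simp add: psi_def abs_mult)
qed

lemma chi_bound: "\<bar>chi y\<bar> \<le> 2"
proof -
  have "1 + y\<^sup>2/2 \<le> exp (y\<^sup>2/2)" using exp_ge_add_one_self[of "y\<^sup>2/2"] by simp
  moreover have "\<bar>y\<^sup>2 - 1\<bar> \<le> y\<^sup>2 + 1" using zero_le_power2[of y] by (auto simp: abs_le_iff)
  ultimately have "\<bar>y\<^sup>2 - 1\<bar> \<le> 2 * exp (y\<^sup>2/2)" by linarith
  then have "\<bar>y\<^sup>2 - 1\<bar> * exp (-(1/2) * y\<^sup>2) \<le> 2 * exp (y\<^sup>2/2) * exp (-(1/2) * y\<^sup>2)"
    by (intro mult_right_mono) auto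
  also have "\<dots> = 2" by (simp add: exp_add[symmetric])
  finally show ?thesis by (simp add: chi_def abs_mult)
qed

lemma psi_meas[measurable]: "psi \<in> borel_measurable borel"
  unfolding psi_def by measurable
lemma chi_meas[measurable]: "chi \<in> borel_measurable borel"
  unfolding chi_def by measurable

lemma psi_cont: "continuous_on UNIV psi"
  unfolding psi_def by (intro continuous_intros)
lemma chi_cont: "continuous_on UNIV chi"
  unfolding chi_def by (intro continuous_intros)

lemma psi_shift_nd: "psi (x - c) = sqrt (2 * pi) * (normal_density c 1 x * (x - c) ^ 1)"
  unfolding psi_def normal_density_def by (simp add: field_simps)

lemma chi_shift_nd: "chi (x - c) = sqrt (2 * pi) * (normal_density c 1 x * (x - c) ^ 2) - sqrt (2 * pi) * (normal_density c 1 x * (x - c) ^ 0)"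
  unfolding chi_def normal_density_def by (simp add: field_simps)

lemma psi_int: "integrable lborel (\<lambda>x. psi (x - c))"
  unfolding psi_shift_nd using integrable_normal_moment[where \<mu>=c and \<sigma>=1 and k=1] by simp

lemma chi_int: "integrable lborel (\<lambda>x. chi (x - c))"
  unfolding chi_shift_nd using integrable_normal_moment[where \<mu>=c and \<sigma>=1 and k=2] integrable_normal_moment[where \<mu>=c and \<sigma>=1 and k=0] by simp

lemma bounded_times_int:
  fixes f g :: "real \<Rightarrow> real"
  assumes "integrable lborel f" "g \<in> borel_measurable borel" "f \<in> borel_measurable borel" "\<And>x. \<bar>g x\<bar> \<le> B"
  shows "integrable lborel (\<lambda>x. g x * f x)"
proof -
  have 1: "integrable lborel (\<lambda>x. B * f x)" using assms(1) by simp
  have 2: "(\<lambda>x. g x * f x) \<in> borel_measurable lborel" using assms by measurable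
  have 3: "AE x in lborel. norm (g x * f x) \<le> norm (B * f x)"
  proof (rule AE_I2)
    fix x
    have "0 \<le> B" using assms(4)[of x] by simp
    then show "norm (g x * f x) \<le> norm (B * f x)"
      using assms(4)[of x] by (simp add: abs_mult mult_right_mono)
  qed
  show ?thesis using Bochner_Integration.integrable_bound[OF 1 2 3] .
qed

lemma psipsi_int: "integrable lborel (\<lambda>x. psi (x - a) * psi (x - b))"
  by (rule bounded_times_int[OF psi_int _ _ psi_bound]) measurable

lemma chichi_int: "integrable lborel (\<lambda>x. chi (x - a) * chi (x - b))"
  by (rule bounded_times_int[OF chi_int _ _ chi_bound]) measurable

lemma quad_zero:
  fixes p r :: "real \<Rightarrow> real"
  assumes cp: "continuous_on UNIV p" and cr: "continuous_on UNIV r"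
    and mp: "p \<in> borel_measurable borel" and mr: "r \<in> borel_measurable borel"
    and ipp: "integrable lborel (\<lambda>x. p x * p x)" and irr: "integrable lborel (\<lambda>x. r x * r x)"
    and ipr: "integrable lborel (\<lambda>x. p x * r x)" and irp: "integrable lborel (\<lambda>x. r x * p x)"
    and e1: "(LINT x|lborel. p x * p x) * v1 + (LINT x|lborel. p x * r x) * v2 = 0"
    and e2: "(LINT x|lborel. r x * p x) * v1 + (LINT x|lborel. r x * r x) * v2 = 0"
  shows "v1 * p x + v2 * r x = 0"
proof -
  define h where "h x = v1 * p x + v2 * r x" for x
  have rp: "(LINT x|lborel. r x * p x) = (LINT x|lborel. p x * r x)" by (simp add: mult.commute)
  have hsq: "h x * h x = v1 * v1 * (p x * p x) + (2 * v1 * v2) * (p x * r x) + v2 * v2 * (r x * r x)" for x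
    by (simp add: h_def algebra_simps)
  have ih: "integrable lborel (\<lambda>x. h x * h x)"
    unfolding hsq using ipp irr ipr by simp
  have "(LINT x|lborel. h x * h x) = v1 * v1 * (LINT x|lborel. p x * p x) + (2 * v1 * v2) * (LINT x|lborel. p x * r x) + v2 * v2 * (LINT x|lborel. r x * r x)"
    unfolding hsq using ipp irr ipr by (simp add: integral_add)
  also have "\<dots> = v1 * ((LINT x|lborel. p x * p x) * v1 + (LINT x|lborel. p x * r x) * v2) + v2 * ((LINT x|lborel. r x * p x) * v1 + (LINT x|lborel. r x * r x) * v2)"
    unfolding rp by (simp add: algebra_simps)
  also have "\<dots> = 0" using e1 e2 by simp
  finally have "(LINT x|lborel. h x * h x) = 0" .
  then have "AE x in lborel. h x * h x = 0"
    using integral_nonneg_eq_0_iff_AE[OF ih] by simp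
  then have "AE x in lebesgue. x \<in> {x. h x * h x = 0}"
    by (simp add: AE_completion)
  moreover have "closed {x. h x * h x = 0}"
    unfolding h_def using cp cr
    by (intro closed_Collect_eq continuous_intros) (auto simp: continuous_on_eq_continuous_at)
  ultimately have "x \<in> {x. h x * h x = 0}" using mem_closed_if_AE_lebesgue by blast
  then show ?thesis by (simp add: h_def)
qed



lemma gram_eq: "gram \<theta> = vector [
   vector [LINT x|lborel. psi (x - \<theta>$1) * psi (x - \<theta>$1), LINT x|lborel. psi (x - \<theta>$1) * psi (x - \<theta>$2), 0, 0],
   vector [LINT x|lborel. psi (x - \<theta>$2) * psi (x - \<theta>$1), LINT x|lborel. psi (x - \<theta>$2) * psi (x - \<theta>$2), 0, 0],
   vector [0, 0, LINT x|lborel. chi (x - \<theta>$3) * chi (x - \<theta>$3), LINT x|lborel. chi (x - \<theta>$3) * - chi (x - \<theta>$4)],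
   vector [0, 0, LINT x|lborel. - chi (x - \<theta>$4) * chi (x - \<theta>$3), LINT x|lborel. - chi (x - \<theta>$4) * - chi (x - \<theta>$4)]]"
  unfolding gram_def vec_eq_iff forall_4
  by (simp add: l2inner_def dtheta1 dtheta2 dtheta3 dtheta4 del: mult_minus_left mult_minus_right minus_mult_minus)

lemma gvec_eq:
  assumes "\<theta>$3 = \<theta>$1" "\<theta>$4 = \<theta>$2"
  shows "gvec \<theta> = gram \<theta> *v qvec"
proof -
  let ?a = "\<theta>$1" and ?b = "\<theta>$2"
  have i1: "(LINT x|lborel. psi (x - ?a) * (psi (x - ?a) - psi (x - ?b))) =
      (LINT x|lborel. psi (x - ?a) * psi (x - ?a)) - (LINT x|lborel. psi (x - ?a) * psi (x - ?b))"
    by (simp add: right_diff_distrib integral_diff psipsi_int)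
  have i2: "(LINT x|lborel. psi (x - ?b) * (psi (x - ?a) - psi (x - ?b))) =
      (LINT x|lborel. psi (x - ?b) * psi (x - ?a)) - (LINT x|lborel. psi (x - ?b) * psi (x - ?b))"
    by (simp add: right_diff_distrib integral_diff psipsi_int)
  have i3: "(LINT x|lborel. chi (x - ?a) * (chi (x - ?a) + chi (x - ?b))) =
      (LINT x|lborel. chi (x - ?a) * chi (x - ?a)) + (LINT x|lborel. chi (x - ?a) * chi (x - ?b))"
    by (simp add: distrib_left integral_add chichi_int)
  have i4: "(LINT x|lborel. - chi (x - ?b) * (chi (x - ?a) + chi (x - ?b))) =
      - (LINT x|lborel. chi (x - ?b) * chi (x - ?a)) - (LINT x|lborel. chi (x - ?b) * chi (x - ?b))"
    by (simp add: distrib_left integral_add chichi_int)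
  show ?thesis
    unfolding gram_eq vec_eq_iff forall_4 using assms i1 i2 i3 i4
    by (simp add: gvec_def l2inner_def dtheta1 dtheta2 dtheta3 dtheta4 Fop_uhat qvec_def
        matrix_vector_mult_def sum_4)
qed

lemma pinv_eq:
  fixes A :: "real^'n^'m" and X :: "real^'m^'n"
  assumes 1: "A ** X ** A = A" and 2: "X ** A ** X = X"
    and 3: "transpose (A ** X) = A ** X" and 4: "transpose (X ** A) = X ** A"
  shows "pinv A = X"
  unfolding pinv_def
proof (rule the_equality)
  show "A ** X ** A = A \<and> X ** A ** X = X \<and> transpose (A ** X) = A ** X \<and> transpose (X ** A) = X ** A"
    using assms by blast
next
  fix Y assume "A ** Y ** A = A \<and> Y ** A ** Y = Y \<and> transpose (A ** Y) = A ** Y \<and> transpose (Y ** A) = Y ** A"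
  then have 5: "A ** Y ** A = A" and 6: "Y ** A ** Y = Y" and 7: "transpose (A ** Y) = A ** Y"
    and 8: "transpose (Y ** A) = Y ** A" by auto
  have tA: "transpose A = transpose A ** transpose Y ** transpose A"
    by (metis 5 matrix_transpose_mul matrix_mul_assoc)
  have tA2: "transpose A = transpose A ** transpose X ** transpose A"
    by (metis 1 matrix_transpose_mul matrix_mul_assoc)
  have "X = X ** (A ** X)" using 2 by (simp add: matrix_mul_assoc)
  also have "\<dots> = X ** transpose X ** transpose A"
    by (metis 3 matrix_transpose_mul matrix_mul_assoc)
  also have "\<dots> = X ** transpose X ** (transpose A ** transpose Y ** transpose A)"
    using tA by simp
  also have "\<dots> = X ** (transpose (A ** X)) ** (transpose (A ** Y))"
    by (simp add: matrix_transpose_mul matrix_mul_assoc)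
  also have "\<dots> = X ** A ** X ** A ** Y" unfolding 3 7 by (simp add: matrix_mul_assoc)
  also have "\<dots> = X ** A ** Y" using 2 by simp
  finally have eX: "X = X ** A ** Y" .
  have "Y = (Y ** A) ** Y" using 6 by simp
  also have "\<dots> = transpose A ** transpose Y ** Y"
    by (metis 8 matrix_transpose_mul)
  also have "\<dots> = (transpose A ** transpose X ** transpose A) ** transpose Y ** Y"
    using tA2 by simp
  also have "\<dots> = (transpose (X ** A)) ** (transpose (Y ** A)) ** Y"
    by (simp add: matrix_transpose_mul matrix_mul_assoc)
  also have "\<dots> = X ** A ** (Y ** A ** Y)" unfolding 4 8 by (simp add: matrix_mul_assoc)
  also have "\<dots> = X ** A ** Y" using 6 by simp
  finally show "Y = X" using eX by simp
qed

lemma null_proj_eq: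
  fixes A :: "real^'n^'m"
  assumes "A *v p = 0" "\<And>w. A *v w = 0 \<Longrightarrow> (v - p) \<bullet> w = 0"
  shows "null_proj A v = p"
  unfolding null_proj_def
proof (rule the_equality)
  show "A *v p = 0 \<and> (\<forall>w. A *v w = 0 \<longrightarrow> (v - p) \<bullet> w = 0)" using assms by blast
next
  fix p' assume h: "A *v p' = 0 \<and> (\<forall>w. A *v w = 0 \<longrightarrow> (v - p') \<bullet> w = 0)"
  have z: "A *v (p' - p) = 0" using h assms(1) by (simp add: matrix_vector_mult_diff_distrib)
  have "(v - p) \<bullet> (p' - p) = 0" using assms(2) z by blast
  moreover have "(v - p') \<bullet> (p' - p) = 0" using h z by blast
  ultimately have "(p' - p) \<bullet> (p' - p) = 0" by (simp add: inner_diff_left inner_diff_right inner_commute)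
  then show "p' = p" by simp
qed

lemma inj_facts:
  fixes A :: "real^'n^'n"
  assumes inj: "\<And>v. A *v v = 0 \<Longrightarrow> v = 0"
  shows "pinv A *v (A *v q) = q" "null_proj A v = 0"
proof -
  have "inj ((*v) A)"
    by (rule injI) (metis inj matrix_vector_mult_diff_distrib right_minus_eq)
  then obtain B where l: "B ** A = mat 1" using matrix_left_invertible_injective by blast
  then have r: "A ** B = mat 1" using matrix_left_right_inverse by blast
  have "pinv A = B"
    by (rule pinv_eq) (simp_all add: l r transpose_mat)
  then show "pinv A *v (A *v q) = q" by (simp add: matrix_vector_mul_assoc l)
  show "null_proj A v = 0" by (rule null_proj_eq) (auto dest: inj)
qed



lemma psi_zero_iff: "psi y = 0 \<longleftrightarrow> y = 0" by (simp add: psi_def)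
lemma chi_zero_iff: "chi y = 0 \<longleftrightarrow> y\<^sup>2 = 1" by (simp add: chi_def)
lemma chi_0: "chi 0 = -1" by (simp add: chi_def)
lemma psi_0: "psi 0 = 0" by (simp add: psi_def)
lemma chi_1: "chi 1 = 0" "chi (-1) = 0" by (simp_all add: chi_def)

lemma psi_cont': "continuous_on UNIV (\<lambda>x. psi (x - a))" unfolding psi_def by (intro continuous_intros)
lemma chi_cont': "continuous_on UNIV (\<lambda>x. chi (x - a))" unfolding chi_def by (intro continuous_intros)
lemma mchi_cont': "continuous_on UNIV (\<lambda>x. - chi (x - a))" unfolding chi_def by (intro continuous_intros)

lemma gram_rows:
  "(gram \<theta> *v v) $ 1 = (LINT x|lborel. psi (x - \<theta>$1) * psi (x - \<theta>$1)) * v$1 + (LINT x|lborel. psi (x - \<theta>$1) * psi (x - \<theta>$2)) * v$2"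
  "(gram \<theta> *v v) $ 2 = (LINT x|lborel. psi (x - \<theta>$2) * psi (x - \<theta>$1)) * v$1 + (LINT x|lborel. psi (x - \<theta>$2) * psi (x - \<theta>$2)) * v$2"
  "(gram \<theta> *v v) $ 3 = (LINT x|lborel. chi (x - \<theta>$3) * chi (x - \<theta>$3)) * v$3 + (LINT x|lborel. chi (x - \<theta>$3) * - chi (x - \<theta>$4)) * v$4"
  "(gram \<theta> *v v) $ 4 = (LINT x|lborel. - chi (x - \<theta>$4) * chi (x - \<theta>$3)) * v$3 + (LINT x|lborel. - chi (x - \<theta>$4) * - chi (x - \<theta>$4)) * v$4"
  unfolding gram_eq by (simp_all add: matrix_vector_mult_def sum_4 del: mult_minus_left mult_minus_right minus_mult_minus)

lemma gram_inj:
  assumes ne1: "\<theta>$1 \<noteq> \<theta>$2" and ne2: "\<theta>$3 \<noteq> \<theta>$4" and z: "gram \<theta> *v v = 0"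
  shows "v = 0"
proof -
  let ?a = "\<theta>$1" and ?b = "\<theta>$2" and ?c = "\<theta>$3" and ?d = "\<theta>$4"
  have r: "(gram \<theta> *v v) $ i = 0" for i using z by simp
  have h1: "v$1 * psi (x - ?a) + v$2 * psi (x - ?b) = 0" for x
    by (rule quad_zero[where p="\<lambda>x. psi (x - ?a)" and r="\<lambda>x. psi (x - ?b)"])
       (use r[of 1] r[of 2] gram_rows in \<open>auto simp: psi_cont' psipsi_int\<close>)
  have h2: "v$3 * chi (x - ?c) + v$4 * - chi (x - ?d) = 0" for x
    by (rule quad_zero[where p="\<lambda>x. chi (x - ?c)" and r="\<lambda>x. - chi (x - ?d)"])
       (use r[of 3] r[of 4] gram_rows in \<open>auto simp: chi_cont' mchi_cont' chichi_int simp del: mult_minus_left mult_minus_right minus_mult_minus\<close>)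
  have v2: "v$2 = 0" using h1[of ?a] ne1 by (simp add: psi_zero_iff psi_0)
  have v1: "v$1 = 0" using h1[of "?a + 1"] v2 by (simp add: psi_zero_iff)
  have v4: "v$4 = 0"
  proof (rule ccontr)
    assume "v$4 \<noteq> 0"
    then have "chi (?c + 1 - ?d) = 0" "chi (?c - 1 - ?d) = 0"
      using h2[of "?c + 1"] h2[of "?c - 1"] by (simp_all add: chi_1)
    then have "(?c - ?d + 1)\<^sup>2 = 1" "(?c - ?d - 1)\<^sup>2 = 1" by (simp_all add: chi_zero_iff algebra_simps)
    then have "?c - ?d = 0" by (simp add: power2_eq_square algebra_simps) 
    then show False using ne2 by simp
  qed
  have v3: "v$3 = 0" using h2[of ?c] v4 by (simp add: chi_0)
  show ?thesis using v1 v2 v3 v4 by (simp add: vec_eq_iff forall_4)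
qed



lemma ts_comp [simp]:
  "theta_star t $ 1 = -2 + t" "theta_star t $ 2 = 2 - t" "theta_star t $ 3 = -2 + t" "theta_star t $ 4 = 2 - t"
  by (simp_all add: theta_star_def)

lemma qvec_comp [simp]: "qvec $ 1 = 1" "qvec $ 2 = -1" "qvec $ 3 = 1" "qvec $ 4 = -1"
  by (simp_all add: qvec_def)

lemma theta_star_lin: "theta_star = (\<lambda>t. vector [-2, 2, -2, 2] + t *\<^sub>R qvec)"
  by (rule ext) (simp add: vec_eq_iff forall_4)

lemma theta_star_2: "theta_star 2 = 0"
  by (simp add: vec_eq_iff forall_4)

lemma case_ne2:
  assumes "t \<noteq> 2"
  shows "eta_bar (theta_star t) = qvec" "null_proj (gram (theta_star t)) v = 0"
proof -
  have inj: "\<And>v. gram (theta_star t) *v v = 0 \<Longrightarrow> v = 0"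
    by (rule gram_inj) (use assms in auto)
  have "gvec (theta_star t) = gram (theta_star t) *v qvec" by (rule gvec_eq) simp_all
  then show "eta_bar (theta_star t) = qvec" unfolding eta_bar_def using inj_facts(1)[OF inj] by simp
  show "null_proj (gram (theta_star t)) v = 0" using inj_facts(2)[OF inj] by simp
qed

definition AA :: real where "AA = (LINT x|lborel. psi x * psi x)"
definition CC :: real where "CC = (LINT x|lborel. chi x * chi x)"

lemma gram_zero: "gram 0 = vector [vector [AA, AA, 0, 0], vector [AA, AA, 0, 0],
    vector [0, 0, CC, -CC], vector [0, 0, -CC, CC]]"
  unfolding gram_eq AA_def CC_def by simp

lemma AA_pos: "AA > 0"
proof -
  have "0 \<le> AA" unfolding AA_def by (rule integral_nonneg_AE) simp
  moreover have "AA \<noteq> 0"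
  proof
    assume "AA = 0"
    have "1 * psi x + 0 * psi x = 0" for x
      by (rule quad_zero[where p=psi and r=psi])
         (use \<open>AA = 0\<close> psipsi_int[of 0 0] in \<open>auto simp: psi_cont AA_def\<close>)
    from this[of 1] show False by (simp add: psi_zero_iff)
  qed
  ultimately show ?thesis by simp
qed

lemma CC_pos: "CC > 0"
proof -
  have "0 \<le> CC" unfolding CC_def by (rule integral_nonneg_AE) simp
  moreover have "CC \<noteq> 0"
  proof
    assume "CC = 0"
    have "1 * chi x + 0 * chi x = 0" for x
      by (rule quad_zero[where p=chi and r=chi])
         (use \<open>CC = 0\<close> chichi_int[of 0 0] in \<open>auto simp: chi_cont CC_def\<close>)
    from this[of 0] show False by (simp add: chi_0)
  qed
  ultimately show ?thesis by simp
qed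

definition XX :: "real^4^4" where
  "XX = vector [vector [1/(4*AA), 1/(4*AA), 0, 0], vector [1/(4*AA), 1/(4*AA), 0, 0],
    vector [0, 0, 1/(4*CC), -1/(4*CC)], vector [0, 0, -1/(4*CC), 1/(4*CC)]]"

lemma pinv_zero: "pinv (gram 0) = XX"
proof -
  have a: "AA \<noteq> 0" and c: "CC \<noteq> 0" using AA_pos CC_pos by auto
  show ?thesis
    by (rule pinv_eq) (simp_all add: gram_zero XX_def vec_eq_iff forall_4 matrix_matrix_mult_def sum_4 transpose_def a c field_simps)
qed

lemma eta_zero: "eta_bar 0 = vector [0, 0, 1, -1]"
proof -
  have c: "CC \<noteq> 0" using CC_pos by auto
  have "gvec 0 = gram 0 *v qvec" by (rule gvec_eq) simp_all
  then show ?thesis unfolding eta_bar_def pinv_zero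
    by (simp add: gram_zero XX_def vec_eq_iff forall_4 matrix_vector_mult_def sum_4 c field_simps)
qed

lemma null_zero: "null_proj (gram 0) (c *\<^sub>R qvec) = c *\<^sub>R vector [1, -1, 0, 0]"
proof (rule null_proj_eq)
  show "gram 0 *v (c *\<^sub>R vector [1, -1, 0, 0]) = 0"
    by (simp add: gram_zero vec_eq_iff forall_4 matrix_vector_mult_def sum_4)
next
  fix w :: "real^4" assume "gram 0 *v w = 0"
  then have "(gram 0 *v w) $ 3 = 0" by simp
  then have "CC * (w$3 - w$4) = 0" by (simp add: gram_zero matrix_vector_mult_def sum_4 algebra_simps)
  then have "w$3 = w$4" using CC_pos by simp
  then show "(c *\<^sub>R qvec - c *\<^sub>R vector [1, -1, 0, 0]) \<bullet> w = 0"
    by (simp add: inner_vec_def sum_4 algebra_simps)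
qed



lemma exp_int:
  fixes \<tau> t :: real
  assumes "\<tau> > 0" "t \<ge> 0"
  shows "((\<lambda>s. exp (- s / \<tau>)) has_integral (\<tau> * (1 - exp (- t / \<tau>)))) {0..t}"
proof -
  have "((\<lambda>s. exp (- s / \<tau>)) has_integral ((- \<tau> * exp (- t / \<tau>)) - (- \<tau> * exp (- 0 / \<tau>)))) {0..t}"
  proof (rule fundamental_theorem_of_calculus)
    fix x :: real
    show "((\<lambda>s. - \<tau> * exp (- s / \<tau>)) has_vector_derivative exp (- x / \<tau>)) (at x within {0..t})"
      unfolding has_real_derivative_iff_has_vector_derivative[symmetric]
      using assms by (auto intro!: derivative_eq_intros)
  qed (use assms in simp)
  then show ?thesis by (simp add: algebra_simps)
qed

theorem propositionA1:
  fixes \<tau> :: real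
  assumes "\<tau> > 0"
  defines "lam \<equiv> 1 / (1 - exp (-2 / \<tau>))"
  shows "(\<exists>m :: real \<Rightarrow> real^4.
            m 0 = 0 \<and>
            (\<forall>t\<ge>0. ((\<lambda>s. eta_bar (theta_star s) - m s) has_integral (\<tau> *\<^sub>R m t)) {0..t}) \<and>
            (\<forall>t\<ge>0. (theta_star has_vector_derivative
                       (eta_bar (theta_star t) + lam *\<^sub>R null_proj (gram (theta_star t)) (m t)))
                     (at t within {0..})) \<and>
            (\<forall>t. 0 \<le> t \<and> t < 2 \<longrightarrow> m t = (1 - exp (- t / \<tau>)) *\<^sub>R qvec) \<and>
            m 2 = (1 - exp (-2 / \<tau>)) *\<^sub>R qvec)
       \<and> (\<forall>t\<ge>0. \<forall>x. fst (uhat (theta_star t) x) = u_exact t x \<and>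
                    ((\<lambda>s. u_exact s x) has_real_derivative snd (uhat (theta_star t) x))
                      (at t within {0..}))"
proof (intro conjI)
  define m where "m t = (1 - exp (- t / \<tau>)) *\<^sub>R qvec" for t
  have c_pos: "1 - exp (-2 / \<tau>) > 0" using assms(1) by simp
  have m0: "m 0 = 0" by (simp add: m_def)
  have mint: "((\<lambda>s. eta_bar (theta_star s) - m s) has_integral (\<tau> *\<^sub>R m t)) {0..t}" if "t \<ge> 0" for t
  proof (rule has_integral_spike[where S="{2}"])
    show "negligible {2::real}" by simp
    show "eta_bar (theta_star s) - m s = exp (- s / \<tau>) *\<^sub>R qvec" if "s \<in> {0..t} - {2}" for s
      using that case_ne2(1)[of s] by (simp add: m_def algebra_simps)
    show "((\<lambda>s. exp (- s / \<tau>) *\<^sub>R qvec) has_integral (\<tau> *\<^sub>R m t)) {0..t}"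
      using has_integral_scaleR_left[OF exp_int[OF assms(1) that], of qvec] by (simp add: m_def)
  qed
  have vel: "eta_bar (theta_star t) + lam *\<^sub>R null_proj (gram (theta_star t)) (m t) = qvec" for t
  proof (cases "t = 2")
    case True
    have "lam * (1 - exp (-2 / \<tau>)) = 1" unfolding lam_def using c_pos by simp
    then show ?thesis unfolding True theta_star_2 m_def
      by (simp add: eta_zero null_zero vec_eq_iff forall_4)
  next
    case False
    then show ?thesis using case_ne2[OF False] by simp
  qed
  have der: "(theta_star has_vector_derivative qvec) (at t within {0..})" for t
    unfolding theta_star_lin by (auto intro!: derivative_eq_intros)
  show "\<exists>m :: real \<Rightarrow> real^4.
            m 0 = 0 \<and>
            (\<forall>t\<ge>0. ((\<lambda>s. eta_bar (theta_star s) - m s) has_integral (\<tau> *\<^sub>R m t)) {0..t}) \<and>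
            (\<forall>t\<ge>0. (theta_star has_vector_derivative
                       (eta_bar (theta_star t) + lam *\<^sub>R null_proj (gram (theta_star t)) (m t)))
                     (at t within {0..})) \<and>
            (\<forall>t. 0 \<le> t \<and> t < 2 \<longrightarrow> m t = (1 - exp (- t / \<tau>)) *\<^sub>R qvec) \<and>
            m 2 = (1 - exp (-2 / \<tau>)) *\<^sub>R qvec"
    by (rule exI[where x=m]) (simp add: m0 mint vel der, simp add: m_def)
  show "\<forall>t\<ge>0. \<forall>x. fst (uhat (theta_star t) x) = u_exact t x \<and>
                    ((\<lambda>s. u_exact s x) has_real_derivative snd (uhat (theta_star t) x))
                      (at t within {0..})"
  proof (intro allI impI conjI)
    fix t x :: real
    show "fst (uhat (theta_star t) x) = u_exact t x"
      by (simp add: uhat_def uhat1_def u_exact_def phi_def algebra_simps power2_eq_square)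
    have "((\<lambda>s. u_exact s x) has_real_derivative snd (uhat (theta_star t) x)) (at t)"
      unfolding u_exact_def phi_def
      by (auto intro!: derivative_eq_intros simp: uhat_def uhat2_def dmu_phi_eq psi_def algebra_simps power2_eq_square)
    then show "((\<lambda>s. u_exact s x) has_real_derivative snd (uhat (theta_star t) x)) (at t within {0..})"
      by (rule has_field_derivative_at_within)
  qed
qed

end
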